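(* Let $m,n\ge 2$ and let $RC(3,m,n)$ be the set of all real vectors $\{P(a,b,c|x,y,z)\}_{a,b,c\in\{1,\dots,n\},\,x,y,z\in\{1,\dots,m\}}$ satisfying $P(a,b,c|x,y,z)\ge 0$, $\sum_{a,b,c}P(a,b,c|x,y,z)=1$ for all $x,y,z$, and the relativistic causal constraints: (i) $\sum_a P(a,b,c|x,y,z)=\sum_a P(a,b,c|x',y,z)$ for all $x,x',y,z,b,c$; (ii) $\sum_c P(a,b,c|x,y,z)=\sum_c P(a,b,c|x,y,z')$ for all $z,z',x,y,a,b$; (iii) $\sum_{b,c} P(a,b,c|x,y,z)=\sum_{b,c} P(a,b,c|x,y',z')$ for all $y,y',z,z',x,a$; (iv) $\sum_{a,b} P(a,b,c|x,y,z)=\sum_{a,b} P(a,b,c|x',y',z)$ for all $x,x',y,y',z,c$. Then the dimension of the polytope $RC(3,m,n)$ (i.e. of its affine hull in $\mathbb{R}^{(mn)^3}$) equals $$[m(n-1)+1]^{3}+m^{2}(m-1)(n-1)^{2}-1.$$ *)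

theory Defs
  imports Complex_Main
begin

definition aff_independent :: "('i \<Rightarrow> real) list \<Rightarrow> bool" where
  "aff_independent ps \<longleftrightarrow>
     (\<forall>l::nat \<Rightarrow> real.
        (\<Sum>j<length ps. l j) = 0 \<and> (\<forall>i. (\<Sum>j<length ps. l j * (ps ! j) i) = 0)
        \<longrightarrow> (\<forall>j<length ps. l j = 0))"

definition affine_dimension :: "('i \<Rightarrow> real) set \<Rightarrow> int" where
  "affine_dimension S =
     (if S = {} then -1
      else int (GREATEST k. \<exists>ps. length ps = Suc k \<and> set ps \<subseteq> S \<and> aff_independent ps))"

type_synonym behaviour = "nat \<times> nat \<times> nat \<times> nat \<times> nat \<times> nat \<Rightarrow> real"

text \<open>P (a,b,c,x,y,z) stands for P(a,b,c|x,y,z); outcomes a,b,c range over {1..n},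
  inputs x,y,z over {1..m}.  Entries outside this index box are fixed to 0, so the set
  lives in a copy of R^((mn)^3).\<close>
definition RC3 :: "nat \<Rightarrow> nat \<Rightarrow> behaviour set" where
  "RC3 m n = {P.
     (\<forall>a b c x y z. \<not> (a \<in> {1..n} \<and> b \<in> {1..n} \<and> c \<in> {1..n} \<and> x \<in> {1..m} \<and> y \<in> {1..m} \<and> z \<in> {1..m})
        \<longrightarrow> P (a,b,c,x,y,z) = 0) \<and>
     (\<forall>a\<in>{1..n}. \<forall>b\<in>{1..n}. \<forall>c\<in>{1..n}. \<forall>x\<in>{1..m}. \<forall>y\<in>{1..m}. \<forall>z\<in>{1..m}.
        P (a,b,c,x,y,z) \<ge> 0) \<and>
     (\<forall>x\<in>{1..m}. \<forall>y\<in>{1..m}. \<forall>z\<in>{1..m}.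
        (\<Sum>a\<in>{1..n}. \<Sum>b\<in>{1..n}. \<Sum>c\<in>{1..n}. P (a,b,c,x,y,z)) = 1) \<and>
     (\<forall>x\<in>{1..m}. \<forall>x'\<in>{1..m}. \<forall>y\<in>{1..m}. \<forall>z\<in>{1..m}. \<forall>b\<in>{1..n}. \<forall>c\<in>{1..n}.
        (\<Sum>a\<in>{1..n}. P (a,b,c,x,y,z)) = (\<Sum>a\<in>{1..n}. P (a,b,c,x',y,z))) \<and>
     (\<forall>z\<in>{1..m}. \<forall>z'\<in>{1..m}. \<forall>x\<in>{1..m}. \<forall>y\<in>{1..m}. \<forall>a\<in>{1..n}. \<forall>b\<in>{1..n}.
        (\<Sum>c\<in>{1..n}. P (a,b,c,x,y,z)) = (\<Sum>c\<in>{1..n}. P (a,b,c,x,y,z'))) \<and>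
     (\<forall>y\<in>{1..m}. \<forall>y'\<in>{1..m}. \<forall>z\<in>{1..m}. \<forall>z'\<in>{1..m}. \<forall>x\<in>{1..m}. \<forall>a\<in>{1..n}.
        (\<Sum>b\<in>{1..n}. \<Sum>c\<in>{1..n}. P (a,b,c,x,y,z)) = (\<Sum>b\<in>{1..n}. \<Sum>c\<in>{1..n}. P (a,b,c,x,y',z'))) \<and>
     (\<forall>x\<in>{1..m}. \<forall>x'\<in>{1..m}. \<forall>y\<in>{1..m}. \<forall>y'\<in>{1..m}. \<forall>z\<in>{1..m}. \<forall>c\<in>{1..n}.
        (\<Sum>a\<in>{1..n}. \<Sum>b\<in>{1..n}. P (a,b,c,x,y,z)) = (\<Sum>a\<in>{1..n}. \<Sum>b\<in>{1..n}. P (a,b,c,x',y',z)))}"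

end

theory Submission
  imports Defs
begin

lemma homog_aux:
  "\<forall>(Q::('j \<Rightarrow> real) set) (J::'j set). finite Q \<longrightarrow> finite J \<longrightarrow> card Q \<le> k \<longrightarrow> k < card J \<longrightarrow>
     (\<exists>l. (\<exists>j\<in>J. l j \<noteq> 0) \<and> (\<forall>f\<in>Q. (\<Sum>j\<in>J. l j * f j) = 0))"
proof (induction k)
  case 0
  show ?case
  proof (intro allI impI)
    fix Q :: "('j \<Rightarrow> real) set" and J :: "'j set"
    assume "finite Q" "finite J" "card Q \<le> 0" "0 < card J"
    then have "Q = {}" "J \<noteq> {}" by auto
    then obtain j where "j \<in> J" by auto
    then show "\<exists>l. (\<exists>j\<in>J. l j \<noteq> 0) \<and> (\<forall>f\<in>Q. (\<Sum>j\<in>J. l j * f j) = 0)"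
      using \<open>Q = {}\<close> by (intro exI[of _ "\<lambda>_. 1"]) auto
  qed
next
  case (Suc k)
  show ?case
  proof (intro allI impI)
    fix Q :: "('j \<Rightarrow> real) set" and J :: "'j set"
    assume fQ: "finite Q" and fJ: "finite J" and cQ: "card Q \<le> Suc k" and cJ: "Suc k < card J"
    show "\<exists>l. (\<exists>j\<in>J. l j \<noteq> 0) \<and> (\<forall>f\<in>Q. (\<Sum>j\<in>J. l j * f j) = 0)"
    proof (cases "Q = {}")
      case True
      from cJ obtain j where "j \<in> J" by (metis card.empty ex_in_conv not_less0)
      then show ?thesis using True by (intro exI[of _ "\<lambda>_. 1"]) auto
    next
      case False
      then obtain f where fin: "f \<in> Q" by auto
      define Q0 where "Q0 = Q - {f}"
      have fQ0: "finite Q0" and cQ0: "card Q0 \<le> k" using fQ cQ fin by (auto simp: Q0_def)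
      have QQ: "Q = insert f Q0" using fin by (auto simp: Q0_def)
      show ?thesis
      proof (cases "\<forall>j\<in>J. f j = 0")
        case True
        from Suc.IH[rule_format, OF fQ0 fJ cQ0] cJ obtain l where
          l: "\<exists>j\<in>J. l j \<noteq> 0" "\<forall>g\<in>Q0. (\<Sum>j\<in>J. l j * g j) = 0" by auto
        then show ?thesis using True QQ by (intro exI[of _ l]) auto
      next
        case False
        then obtain j0 where j0: "j0 \<in> J" "f j0 \<noteq> 0" by auto
        define Q' where "Q' = (\<lambda>g. \<lambda>j. g j - g j0 / f j0 * f j) ` Q0"
        define J' where "J' = J - {j0}"
        have fQ': "finite Q'" using fQ0 by (simp add: Q'_def)
        have cQ': "card Q' \<le> k" using card_image_le[OF fQ0] cQ0 unfolding Q'_def by (meson le_trans)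
        have fJ': "finite J'" using fJ by (simp add: J'_def)
        have cJ': "k < card J'" using cJ j0 fJ by (simp add: J'_def)
        from Suc.IH[rule_format, OF fQ' fJ' cQ' cJ'] obtain l' where
          l': "\<exists>j\<in>J'. l' j \<noteq> 0" "\<forall>g\<in>Q'. (\<Sum>j\<in>J'. l' j * g j) = 0" by auto
        define S where "S = (\<Sum>j\<in>J'. l' j * f j)"
        define l where "l = (\<lambda>j. if j = j0 then - S / f j0 else l' j)"
        have split: "(\<Sum>j\<in>J. l j * g j) = l j0 * g j0 + (\<Sum>j\<in>J'. l' j * g j)" for g
        proof -
          have "(\<Sum>j\<in>J. l j * g j) = l j0 * g j0 + (\<Sum>j\<in>J'. l j * g j)"
            unfolding J'_def using sum.remove[OF fJ j0(1)] by blast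
          also have "(\<Sum>j\<in>J'. l j * g j) = (\<Sum>j\<in>J'. l' j * g j)"
            by (rule sum.cong) (auto simp: l_def J'_def)
          finally show ?thesis .
        qed
        have "\<forall>g\<in>Q. (\<Sum>j\<in>J. l j * g j) = 0"
        proof
          fix g assume "g \<in> Q"
          then consider "g = f" | "g \<in> Q0" using QQ by auto
          then show "(\<Sum>j\<in>J. l j * g j) = 0"
          proof cases
            case 1
            then show ?thesis using split[of f] j0 by (simp add: l_def S_def)
          next
            case 2
            then have "(\<lambda>j. g j - g j0 / f j0 * f j) \<in> Q'" unfolding Q'_def by auto
            with l' have z: "(\<Sum>j\<in>J'. l' j * (g j - g j0 / f j0 * f j)) = 0" by auto
            have "(\<Sum>j\<in>J'. l' j * g j) = (\<Sum>j\<in>J'. l' j * (g j - g j0 / f j0 * f j)) + g j0 / f j0 * S"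
              by (simp add: S_def sum_distrib_left algebra_simps sum.distrib[symmetric] sum_subtractf[symmetric])
            then have "(\<Sum>j\<in>J'. l' j * g j) = g j0 / f j0 * S" using z by simp
            then show ?thesis using split[of g] j0 by (simp add: l_def field_simps)
          qed
        qed
        moreover have "\<exists>j\<in>J. l j \<noteq> 0" using l' by (auto simp: l_def J'_def)
        ultimately show ?thesis by blast
      qed
    qed
  qed
qed

lemma homog:
  fixes Q :: "('j \<Rightarrow> real) set"
  assumes "finite Q" "finite J" "card Q < card J"
  shows "\<exists>l. (\<exists>j\<in>J. l j \<noteq> 0) \<and> (\<forall>f\<in>Q. (\<Sum>j\<in>J. l j * f j) = 0)"
  using homog_aux[of "card Q"] assms by blast

definition hom :: "nat \<Rightarrow> nat \<Rightarrow> behaviour \<Rightarrow> bool" where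
  "hom m n P \<longleftrightarrow>
     (\<forall>a b c x y z. \<not> (a \<in> {1..n} \<and> b \<in> {1..n} \<and> c \<in> {1..n} \<and> x \<in> {1..m} \<and> y \<in> {1..m} \<and> z \<in> {1..m})
        \<longrightarrow> P (a,b,c,x,y,z) = 0) \<and>
     (\<forall>x\<in>{1..m}. \<forall>y\<in>{1..m}. \<forall>z\<in>{1..m}.
        (\<Sum>a\<in>{1..n}. \<Sum>b\<in>{1..n}. \<Sum>c\<in>{1..n}. P (a,b,c,x,y,z)) = 0) \<and>
     (\<forall>x\<in>{1..m}. \<forall>x'\<in>{1..m}. \<forall>y\<in>{1..m}. \<forall>z\<in>{1..m}. \<forall>b\<in>{1..n}. \<forall>c\<in>{1..n}.
        (\<Sum>a\<in>{1..n}. P (a,b,c,x,y,z)) = (\<Sum>a\<in>{1..n}. P (a,b,c,x',y,z))) \<and>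
     (\<forall>z\<in>{1..m}. \<forall>z'\<in>{1..m}. \<forall>x\<in>{1..m}. \<forall>y\<in>{1..m}. \<forall>a\<in>{1..n}. \<forall>b\<in>{1..n}.
        (\<Sum>c\<in>{1..n}. P (a,b,c,x,y,z)) = (\<Sum>c\<in>{1..n}. P (a,b,c,x,y,z'))) \<and>
     (\<forall>y\<in>{1..m}. \<forall>y'\<in>{1..m}. \<forall>z\<in>{1..m}. \<forall>z'\<in>{1..m}. \<forall>x\<in>{1..m}. \<forall>a\<in>{1..n}.
        (\<Sum>b\<in>{1..n}. \<Sum>c\<in>{1..n}. P (a,b,c,x,y,z)) = (\<Sum>b\<in>{1..n}. \<Sum>c\<in>{1..n}. P (a,b,c,x,y',z'))) \<and>
     (\<forall>x\<in>{1..m}. \<forall>x'\<in>{1..m}. \<forall>y\<in>{1..m}. \<forall>y'\<in>{1..m}. \<forall>z\<in>{1..m}. \<forall>c\<in>{1..n}.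
        (\<Sum>a\<in>{1..n}. \<Sum>b\<in>{1..n}. P (a,b,c,x,y,z)) = (\<Sum>a\<in>{1..n}. \<Sum>b\<in>{1..n}. P (a,b,c,x',y',z)))"

lemma sum_lin: "(\<Sum>a\<in>A. \<Sum>j<N. (c::nat\<Rightarrow>real) j * G j a) = (\<Sum>j<N. c j * (\<Sum>a\<in>A. G j a))"
proof -
  have "(\<Sum>a\<in>A. \<Sum>j<N. c j * G j a) = (\<Sum>j<N. \<Sum>a\<in>A. c j * G j a)" by (rule sum.swap)
  also have "\<dots> = (\<Sum>j<N. c j * (\<Sum>a\<in>A. G j a))" by (rule sum.cong[OF refl], rule sum_distrib_left[symmetric])
  finally show ?thesis .
qed

lemma RC3_out:
  assumes "P \<in> RC3 m n"
  shows "\<not> (a \<in> {1..n} \<and> b \<in> {1..n} \<and> c \<in> {1..n} \<and> x \<in> {1..m} \<and> y \<in> {1..m} \<and> z \<in> {1..m}) \<Longrightarrow> P (a,b,c,x,y,z) = 0"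
  using assms[unfolded RC3_def mem_Collect_eq, THEN conjunct1] by blast

lemma RC3_nn:
  assumes "P \<in> RC3 m n"
  shows "a \<in> {1..n} \<Longrightarrow> b \<in> {1..n} \<Longrightarrow> c \<in> {1..n} \<Longrightarrow> x \<in> {1..m} \<Longrightarrow> y \<in> {1..m} \<Longrightarrow> z \<in> {1..m} \<Longrightarrow> P (a,b,c,x,y,z) \<ge> 0"
  using assms[unfolded RC3_def mem_Collect_eq, THEN conjunct2, THEN conjunct1] by blast

lemma RC3_sum:
  assumes "P \<in> RC3 m n"
  shows "x \<in> {1..m} \<Longrightarrow> y \<in> {1..m} \<Longrightarrow> z \<in> {1..m} \<Longrightarrow> (\<Sum>a\<in>{1..n}. \<Sum>b\<in>{1..n}. \<Sum>c\<in>{1..n}. P (a,b,c,x,y,z)) = 1"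
  using assms[unfolded RC3_def mem_Collect_eq, THEN conjunct2, THEN conjunct2, THEN conjunct1] by blast

lemma RC3_i:
  assumes "P \<in> RC3 m n"
  shows "x \<in> {1..m} \<Longrightarrow> x' \<in> {1..m} \<Longrightarrow> y \<in> {1..m} \<Longrightarrow> z \<in> {1..m} \<Longrightarrow> b \<in> {1..n} \<Longrightarrow> c \<in> {1..n} \<Longrightarrow>
        (\<Sum>a\<in>{1..n}. P (a,b,c,x,y,z)) = (\<Sum>a\<in>{1..n}. P (a,b,c,x',y,z))"
  using assms[unfolded RC3_def mem_Collect_eq, THEN conjunct2, THEN conjunct2, THEN conjunct2, THEN conjunct1] by blast

lemma RC3_ii:
  assumes "P \<in> RC3 m n"
  shows "z \<in> {1..m} \<Longrightarrow> z' \<in> {1..m} \<Longrightarrow> x \<in> {1..m} \<Longrightarrow> y \<in> {1..m} \<Longrightarrow> a \<in> {1..n} \<Longrightarrow> b \<in> {1..n} \<Longrightarrow>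
        (\<Sum>c\<in>{1..n}. P (a,b,c,x,y,z)) = (\<Sum>c\<in>{1..n}. P (a,b,c,x,y,z'))"
  using assms[unfolded RC3_def mem_Collect_eq, THEN conjunct2, THEN conjunct2, THEN conjunct2, THEN conjunct2, THEN conjunct1] by blast

lemma RC3_iii:
  assumes "P \<in> RC3 m n"
  shows "y \<in> {1..m} \<Longrightarrow> y' \<in> {1..m} \<Longrightarrow> z \<in> {1..m} \<Longrightarrow> z' \<in> {1..m} \<Longrightarrow> x \<in> {1..m} \<Longrightarrow> a \<in> {1..n} \<Longrightarrow>
        (\<Sum>b\<in>{1..n}. \<Sum>c\<in>{1..n}. P (a,b,c,x,y,z)) = (\<Sum>b\<in>{1..n}. \<Sum>c\<in>{1..n}. P (a,b,c,x,y',z'))"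
  using assms[unfolded RC3_def mem_Collect_eq, THEN conjunct2, THEN conjunct2, THEN conjunct2, THEN conjunct2, THEN conjunct2, THEN conjunct1] by blast

lemma RC3_iv:
  assumes "P \<in> RC3 m n"
  shows "x \<in> {1..m} \<Longrightarrow> x' \<in> {1..m} \<Longrightarrow> y \<in> {1..m} \<Longrightarrow> y' \<in> {1..m} \<Longrightarrow> z \<in> {1..m} \<Longrightarrow> c \<in> {1..n} \<Longrightarrow>
        (\<Sum>a\<in>{1..n}. \<Sum>b\<in>{1..n}. P (a,b,c,x,y,z)) = (\<Sum>a\<in>{1..n}. \<Sum>b\<in>{1..n}. P (a,b,c,x',y',z))"
  using assms[unfolded RC3_def mem_Collect_eq, THEN conjunct2, THEN conjunct2, THEN conjunct2, THEN conjunct2, THEN conjunct2, THEN conjunct2] by blast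

lemma comb_hom:
  assumes ps: "set ps \<subseteq> RC3 m n" and l: "(\<Sum>j<length ps. l j) = 0"
  shows "hom m n (\<lambda>i. \<Sum>j<length ps. l j * (ps ! j) i)"
proof -
  have P: "ps ! j \<in> RC3 m n" if "j < length ps" for j using ps that by auto
  show ?thesis unfolding hom_def
  proof (intro conjI ballI allI impI)
    fix a b c x y z
    assume "\<not> (a \<in> {1..n} \<and> b \<in> {1..n} \<and> c \<in> {1..n} \<and> x \<in> {1..m} \<and> y \<in> {1..m} \<and> z \<in> {1..m})"
    then show "(\<Sum>j<length ps. l j * (ps ! j) (a,b,c,x,y,z)) = 0"
      by (intro sum.neutral ballI) (simp add: RC3_out[OF P])
  next
    fix x y z assume h: "x \<in> {1..m}" "y \<in> {1..m}" "z \<in> {1..m}"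
    have "(\<Sum>a\<in>{1..n}. \<Sum>b\<in>{1..n}. \<Sum>c\<in>{1..n}. \<Sum>j<length ps. l j * (ps ! j) (a,b,c,x,y,z))
       = (\<Sum>j<length ps. l j * (\<Sum>a\<in>{1..n}. \<Sum>b\<in>{1..n}. \<Sum>c\<in>{1..n}. (ps ! j) (a,b,c,x,y,z)))"
      by (simp only: sum_lin)
    also have "\<dots> = (\<Sum>j<length ps. l j)"
    proof (rule sum.cong[OF refl])
      fix j assume "j \<in> {..<length ps}"
      then have Pj: "ps ! j \<in> RC3 m n" using P by simp
      show "l j * (\<Sum>a\<in>{1..n}. \<Sum>b\<in>{1..n}. \<Sum>c\<in>{1..n}. (ps ! j) (a,b,c,x,y,z)) = l j"
        using RC3_sum[OF Pj h] by simp
    qed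
    finally show "(\<Sum>a\<in>{1..n}. \<Sum>b\<in>{1..n}. \<Sum>c\<in>{1..n}. \<Sum>j<length ps. l j * (ps ! j) (a,b,c,x,y,z)) = 0"
      using l by simp
  next
    fix x x' y z b c assume h: "x \<in> {1..m}" "x' \<in> {1..m}" "y \<in> {1..m}" "z \<in> {1..m}" "b \<in> {1..n}" "c \<in> {1..n}"
    show "(\<Sum>a\<in>{1..n}. \<Sum>j<length ps. l j * (ps ! j) (a,b,c,x,y,z)) = (\<Sum>a\<in>{1..n}. \<Sum>j<length ps. l j * (ps ! j) (a,b,c,x',y,z))"
      unfolding sum_lin
      by (rule sum.cong[OF refl], drule lessThan_iff[THEN iffD1], drule P, drule RC3_i[OF _ h], simp)
  next
    fix z z' x y a b assume h: "z \<in> {1..m}" "z' \<in> {1..m}" "x \<in> {1..m}" "y \<in> {1..m}" "a \<in> {1..n}" "b \<in> {1..n}"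
    show "(\<Sum>c\<in>{1..n}. \<Sum>j<length ps. l j * (ps ! j) (a,b,c,x,y,z)) = (\<Sum>c\<in>{1..n}. \<Sum>j<length ps. l j * (ps ! j) (a,b,c,x,y,z'))"
      unfolding sum_lin
      by (rule sum.cong[OF refl], drule lessThan_iff[THEN iffD1], drule P, drule RC3_ii[OF _ h], simp)
  next
    fix y y' z z' x a assume h: "y \<in> {1..m}" "y' \<in> {1..m}" "z \<in> {1..m}" "z' \<in> {1..m}" "x \<in> {1..m}" "a \<in> {1..n}"
    show "(\<Sum>b\<in>{1..n}. \<Sum>c\<in>{1..n}. \<Sum>j<length ps. l j * (ps ! j) (a,b,c,x,y,z)) = (\<Sum>b\<in>{1..n}. \<Sum>c\<in>{1..n}. \<Sum>j<length ps. l j * (ps ! j) (a,b,c,x,y',z'))"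
      unfolding sum_lin
      by (rule sum.cong[OF refl], drule lessThan_iff[THEN iffD1], drule P, drule RC3_iii[OF _ h], simp)
  next
    fix x x' y y' z c assume h: "x \<in> {1..m}" "x' \<in> {1..m}" "y \<in> {1..m}" "y' \<in> {1..m}" "z \<in> {1..m}" "c \<in> {1..n}"
    show "(\<Sum>a\<in>{1..n}. \<Sum>b\<in>{1..n}. \<Sum>j<length ps. l j * (ps ! j) (a,b,c,x,y,z)) = (\<Sum>a\<in>{1..n}. \<Sum>b\<in>{1..n}. \<Sum>j<length ps. l j * (ps ! j) (a,b,c,x',y',z))"
      unfolding sum_lin
      by (rule sum.cong[OF refl], drule lessThan_iff[THEN iffD1], drule P, drule RC3_iv[OF _ h], simp)
  qed
qed

lemma sum_single:
  assumes "1 \<le> n" "\<And>b. b \<in> {1..n} \<Longrightarrow> b \<noteq> n \<Longrightarrow> f b = 0"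
  shows "(\<Sum>b\<in>{1..n::nat}. f b) = (f n::real)"
proof -
  have "(\<Sum>b\<in>{1..n}. f b) = (\<Sum>b\<in>{1..n}. if b = n then f n else 0)"
    using assms(2) by (intro sum.cong) auto
  also have "\<dots> = f n" using assms(1) by simp
  finally show ?thesis .
qed

lemma sum_zero: "(\<And>b. b \<in> A \<Longrightarrow> f b = 0) \<Longrightarrow> (\<Sum>b\<in>A. f b) = (0::real)"
  by simp

lemma hom_out:
  assumes "hom m n R"
  shows "\<not> (a \<in> {1..n} \<and> b \<in> {1..n} \<and> c \<in> {1..n} \<and> x \<in> {1..m} \<and> y \<in> {1..m} \<and> z \<in> {1..m}) \<Longrightarrow> R (a,b,c,x,y,z) = 0"
  using assms[unfolded hom_def, THEN conjunct1] by blast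
lemma hom_sum:
  assumes "hom m n R"
  shows "x \<in> {1..m} \<Longrightarrow> y \<in> {1..m} \<Longrightarrow> z \<in> {1..m} \<Longrightarrow> (\<Sum>a\<in>{1..n}. \<Sum>b\<in>{1..n}. \<Sum>c\<in>{1..n}. R (a,b,c,x,y,z)) = 0"
  using assms[unfolded hom_def, THEN conjunct2, THEN conjunct1] by blast
lemma hom_i:
  assumes "hom m n R"
  shows "x \<in> {1..m} \<Longrightarrow> x' \<in> {1..m} \<Longrightarrow> y \<in> {1..m} \<Longrightarrow> z \<in> {1..m} \<Longrightarrow> b \<in> {1..n} \<Longrightarrow> c \<in> {1..n} \<Longrightarrow>
        (\<Sum>a\<in>{1..n}. R (a,b,c,x,y,z)) = (\<Sum>a\<in>{1..n}. R (a,b,c,x',y,z))"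
  using assms[unfolded hom_def, THEN conjunct2, THEN conjunct2, THEN conjunct1] by blast
lemma hom_ii:
  assumes "hom m n R"
  shows "z \<in> {1..m} \<Longrightarrow> z' \<in> {1..m} \<Longrightarrow> x \<in> {1..m} \<Longrightarrow> y \<in> {1..m} \<Longrightarrow> a \<in> {1..n} \<Longrightarrow> b \<in> {1..n} \<Longrightarrow>
        (\<Sum>c\<in>{1..n}. R (a,b,c,x,y,z)) = (\<Sum>c\<in>{1..n}. R (a,b,c,x,y,z'))"
  using assms[unfolded hom_def, THEN conjunct2, THEN conjunct2, THEN conjunct2, THEN conjunct1] by blast
lemma hom_iii:
  assumes "hom m n R"
  shows "y \<in> {1..m} \<Longrightarrow> y' \<in> {1..m} \<Longrightarrow> z \<in> {1..m} \<Longrightarrow> z' \<in> {1..m} \<Longrightarrow> x \<in> {1..m} \<Longrightarrow> a \<in> {1..n} \<Longrightarrow>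
        (\<Sum>b\<in>{1..n}. \<Sum>c\<in>{1..n}. R (a,b,c,x,y,z)) = (\<Sum>b\<in>{1..n}. \<Sum>c\<in>{1..n}. R (a,b,c,x,y',z'))"
  using assms[unfolded hom_def, THEN conjunct2, THEN conjunct2, THEN conjunct2, THEN conjunct2, THEN conjunct1] by blast
lemma hom_iv:
  assumes "hom m n R"
  shows "x \<in> {1..m} \<Longrightarrow> x' \<in> {1..m} \<Longrightarrow> y \<in> {1..m} \<Longrightarrow> y' \<in> {1..m} \<Longrightarrow> z \<in> {1..m} \<Longrightarrow> c \<in> {1..n} \<Longrightarrow>
        (\<Sum>a\<in>{1..n}. \<Sum>b\<in>{1..n}. R (a,b,c,x,y,z)) = (\<Sum>a\<in>{1..n}. \<Sum>b\<in>{1..n}. R (a,b,c,x',y',z))"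
  using assms[unfolded hom_def, THEN conjunct2, THEN conjunct2, THEN conjunct2, THEN conjunct2, THEN conjunct2] by blast

lemma inj_core:
  assumes H: "hom m n R" and n: "1 \<le> n" and m: "1 \<le> m"
  and E1: "\<And>a b c x y z. a \<in> {1..n} \<Longrightarrow> b \<in> {1..n} \<Longrightarrow> c \<in> {1..n} \<Longrightarrow> x \<in> {1..m} \<Longrightarrow> y \<in> {1..m} \<Longrightarrow> z \<in> {1..m} \<Longrightarrow>
     (a < n \<or> x = 1) \<Longrightarrow> (b < n \<or> y = 1) \<Longrightarrow> (c < n \<or> z = 1) \<Longrightarrow> \<not> (a = n \<and> b = n \<and> c = n) \<Longrightarrow> R (a,b,c,x,y,z) = 0"
  and E2: "\<And>a c x y z. a \<in> {1..<n} \<Longrightarrow> c \<in> {1..<n} \<Longrightarrow> x \<in> {1..m} \<Longrightarrow> y \<in> {1..m} \<Longrightarrow> z \<in> {1..m} \<Longrightarrow> R (a,n,c,x,y,z) = 0"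
  shows "R i = 0"
proof -
  have one: "1 \<in> {1..m}" using m by simp
  have nn: "n \<in> {1..n}" using n by simp
  have S1: "R (a,b,c,x,y,z) = 0" if "a \<in> {1..n}" "b \<in> {1..n}" "c \<in> {1..n}" "x \<in> {1..m}" "y \<in> {1..m}" "z \<in> {1..m}"
    "a < n" "c < n" for a b c x y z
  proof (cases "b < n \<or> y = 1")
    case True then show ?thesis using E1 that by auto
  next
    case False then have "b = n" using that by auto
    then show ?thesis using E2[of a c x y z] that by auto
  qed
  have S2a: "R (a,b,n,x,y,1) = 0" if "a \<in> {1..n}" "b \<in> {1..n}" "x \<in> {1..m}" "y \<in> {1..m}" "a < n" "b < n \<or> y = 1" for a b x y
    using E1[of a b n x y 1] that nn one by auto
  have S2: "R (a,b,n,x,y,1) = 0" if "a \<in> {1..n}" "b \<in> {1..n}" "x \<in> {1..m}" "y \<in> {1..m}" "a < n" for a b x y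
  proof (cases "b < n \<or> y = 1")
    case True then show ?thesis using S2a that by auto
  next
    case False then have bn: "b = n" using that by auto
    have "(\<Sum>b\<in>{1..n}. \<Sum>c\<in>{1..n}. R (a,b,c,x,y,1)) = (\<Sum>b\<in>{1..n}. \<Sum>c\<in>{1..n}. R (a,b,c,x,1,1))"
      using hom_iii[OF H that(4) one one one that(3) that(1)] .
    also have "\<dots> = 0"
    proof (intro sum_zero)
      fix b c assume bc: "b \<in> {1..n}" "c \<in> {1..n}"
      show "R (a,b,c,x,1,1) = 0"
      proof (cases "c < n")
        case True then show ?thesis using S1[of a b c x 1 1] that one bc by auto
      next
        case False then have "c = n" using bc by auto
        then show ?thesis using S2a[of a b x 1] that one bc by auto
      qed
    qed
    finally have z: "(\<Sum>b\<in>{1..n}. \<Sum>c\<in>{1..n}. R (a,b,c,x,y,1)) = 0" .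
    have "(\<Sum>b\<in>{1..n}. \<Sum>c\<in>{1..n}. R (a,b,c,x,y,1)) = (\<Sum>b\<in>{1..n}. R (a,b,n,x,y,1))"
      using S1 that one by (intro sum.cong refl sum_single n) auto
    also have "\<dots> = R (a,n,n,x,y,1)"
      using S2a that by (intro sum_single n) auto
    finally show ?thesis using z bn by simp
  qed
  have SA: "R (a,b,c,x,y,z) = 0" if "a \<in> {1..n}" "b \<in> {1..n}" "c \<in> {1..n}" "x \<in> {1..m}" "y \<in> {1..m}" "z \<in> {1..m}"
    "a < n" for a b c x y z
  proof (cases "c < n")
    case True then show ?thesis using S1 that by auto
  next
    case False then have cn: "c = n" using that by auto
    have "(\<Sum>c\<in>{1..n}. R (a,b,c,x,y,z)) = (\<Sum>c\<in>{1..n}. R (a,b,c,x,y,1))"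
      using hom_ii[OF H that(6) one that(4) that(5) that(1) that(2)] .
    moreover have "(\<Sum>c\<in>{1..n}. R (a,b,c,x,y,z)) = R (a,b,n,x,y,z)"
      using S1 that by (intro sum_single n) auto
    moreover have "(\<Sum>c\<in>{1..n}. R (a,b,c,x,y,1)) = R (a,b,n,x,y,1)"
      using S1 that one by (intro sum_single n) auto
    ultimately show ?thesis using S2 that cn by simp
  qed
  have S2'a: "R (n,b,c,1,y,z) = 0" if "b \<in> {1..n}" "c \<in> {1..n}" "y \<in> {1..m}" "z \<in> {1..m}" "c < n" "b < n \<or> y = 1" for b c y z
    using E1[of n b c 1 y z] that nn one by auto
  have S2': "R (n,b,c,1,y,z) = 0" if "b \<in> {1..n}" "c \<in> {1..n}" "y \<in> {1..m}" "z \<in> {1..m}" "c < n" for b c y z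
  proof (cases "b < n \<or> y = 1")
    case True then show ?thesis using S2'a that by auto
  next
    case False then have bn: "b = n" using that by auto
    have "(\<Sum>a\<in>{1..n}. \<Sum>b\<in>{1..n}. R (a,b,c,1,y,z)) = (\<Sum>a\<in>{1..n}. \<Sum>b\<in>{1..n}. R (a,b,c,1,1,z))"
      using hom_iv[OF H one one that(3) one that(4) that(2)] .
    also have "\<dots> = 0"
    proof (intro sum_zero)
      fix a b assume ab: "a \<in> {1..n}" "b \<in> {1..n}"
      show "R (a,b,c,1,1,z) = 0"
      proof (cases "a < n")
        case True then show ?thesis using SA[of a b c 1 1 z] that one ab by auto
      next
        case False then have "a = n" using ab by auto
        then show ?thesis using S2'a[of b c 1 z] that one ab by auto
      qed
    qed
    finally have z: "(\<Sum>a\<in>{1..n}. \<Sum>b\<in>{1..n}. R (a,b,c,1,y,z)) = 0" .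
    have "(\<Sum>a\<in>{1..n}. \<Sum>b\<in>{1..n}. R (a,b,c,1,y,z)) = (\<Sum>b\<in>{1..n}. R (n,b,c,1,y,z))"
      using SA that one by (intro sum_single n) (auto intro!: sum_zero)
    also have "\<dots> = R (n,n,c,1,y,z)"
      using S2'a that by (intro sum_single n) auto
    finally show ?thesis using z bn by simp
  qed
  have SC: "R (a,b,c,x,y,z) = 0" if "a \<in> {1..n}" "b \<in> {1..n}" "c \<in> {1..n}" "x \<in> {1..m}" "y \<in> {1..m}" "z \<in> {1..m}"
    "c < n" for a b c x y z
  proof (cases "a < n")
    case True then show ?thesis using SA that by auto
  next
    case False then have an: "a = n" using that by auto
    have "(\<Sum>a\<in>{1..n}. R (a,b,c,x,y,z)) = (\<Sum>a\<in>{1..n}. R (a,b,c,1,y,z))"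
      using hom_i[OF H that(4) one that(5) that(6) that(2) that(3)] .
    moreover have "(\<Sum>a\<in>{1..n}. R (a,b,c,x,y,z)) = R (n,b,c,x,y,z)"
      using SA that by (intro sum_single n) auto
    moreover have "(\<Sum>a\<in>{1..n}. R (a,b,c,1,y,z)) = R (n,b,c,1,y,z)"
      using SA that one by (intro sum_single n) auto
    ultimately show ?thesis using S2' that an by simp
  qed
  have S5a: "R (n,b,n,x,y,z) = R (n,b,n,1,y,1)" if "b \<in> {1..n}" "x \<in> {1..m}" "y \<in> {1..m}" "z \<in> {1..m}" for b x y z
  proof -
    have "(\<Sum>a\<in>{1..n}. R (a,b,n,x,y,z)) = (\<Sum>a\<in>{1..n}. R (a,b,n,1,y,z))"
      using hom_i[OF H that(2) one that(3) that(4) that(1) nn] .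
    moreover have "(\<Sum>a\<in>{1..n}. R (a,b,n,x,y,z)) = R (n,b,n,x,y,z)"
      using SA that nn by (intro sum_single n) auto
    moreover have "(\<Sum>a\<in>{1..n}. R (a,b,n,1,y,z)) = R (n,b,n,1,y,z)"
      using SA that one nn by (intro sum_single n) auto
    moreover have "(\<Sum>c\<in>{1..n}. R (n,b,c,1,y,z)) = (\<Sum>c\<in>{1..n}. R (n,b,c,1,y,1))"
      using hom_ii[OF H that(4) one one that(3) nn that(1)] .
    moreover have "(\<Sum>c\<in>{1..n}. R (n,b,c,1,y,z)) = R (n,b,n,1,y,z)"
      using SC that one nn by (intro sum_single n) auto
    moreover have "(\<Sum>c\<in>{1..n}. R (n,b,c,1,y,1)) = R (n,b,n,1,y,1)"
      using SC that one nn by (intro sum_single n) auto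
    ultimately show ?thesis by simp
  qed
  have S5b: "R (n,b,n,1,y,1) = 0" if "b \<in> {1..n}" "b < n" "y \<in> {1..m}" for b y
    using E1[of n b n 1 y 1] that nn one by auto
  have S5: "R (n,n,n,1,y,1) = 0" if "y \<in> {1..m}" for y
  proof -
    have "(\<Sum>a\<in>{1..n}. \<Sum>b\<in>{1..n}. \<Sum>c\<in>{1..n}. R (a,b,c,1,y,1)) = 0"
      using hom_sum[OF H one that one] .
    moreover have "(\<Sum>a\<in>{1..n}. \<Sum>b\<in>{1..n}. \<Sum>c\<in>{1..n}. R (a,b,c,1,y,1)) = (\<Sum>b\<in>{1..n}. \<Sum>c\<in>{1..n}. R (n,b,c,1,y,1))"
      using SA that one by (intro sum_single n) (auto intro!: sum_zero)
    moreover have "(\<Sum>b\<in>{1..n}. \<Sum>c\<in>{1..n}. R (n,b,c,1,y,1)) = (\<Sum>c\<in>{1..n}. R (n,n,c,1,y,1))"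
    proof (intro sum_single n)
      fix b assume b: "b \<in> {1..n}" "b \<noteq> n"
      have "(\<Sum>c\<in>{1..n}. R (n,b,c,1,y,1)) = R (n,b,n,1,y,1)"
        using SC that one nn b by (intro sum_single n) auto
      also have "\<dots> = 0" using S5b b that by auto
      finally show "(\<Sum>c\<in>{1..n}. R (n,b,c,1,y,1)) = 0" .
    qed
    moreover have "(\<Sum>c\<in>{1..n}. R (n,n,c,1,y,1)) = R (n,n,n,1,y,1)"
      using SC that one nn by (intro sum_single n) auto
    ultimately show ?thesis by simp
  qed
  obtain a b c x y z where i: "i = (a,b,c,x,y,z)" by (cases i) auto
  show ?thesis
  proof (cases "a \<in> {1..n} \<and> b \<in> {1..n} \<and> c \<in> {1..n} \<and> x \<in> {1..m} \<and> y \<in> {1..m} \<and> z \<in> {1..m}")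
    case False then show ?thesis using hom_out[OF H False] i by simp
  next
    case True
    then have bx: "a \<in> {1..n}" "b \<in> {1..n}" "c \<in> {1..n}" "x \<in> {1..m}" "y \<in> {1..m}" "z \<in> {1..m}" by auto
    consider "a < n" | "c < n" | "a = n" "c = n" using bx by fastforce
    then show ?thesis
    proof cases
      case 1 then show ?thesis using SA[OF bx] i by simp
    next
      case 2 then show ?thesis using SC[OF bx] i by simp
    next
      case 3
      have e: "R i = R (n,b,n,1,y,1)" using S5a[OF bx(2) bx(4) bx(5) bx(6)] i 3 by simp
      show ?thesis
      proof (cases "b < n")
        case True then show ?thesis using e S5b[OF bx(2) True bx(5)] by simp
      next
        case False then have "b = n" using bx by auto
        then show ?thesis using e S5[OF bx(5)] by simp
      qed
    qed
  qed
qed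

definition Tset :: "nat \<Rightarrow> nat \<Rightarrow> (nat \<times> nat) option set" where
  "Tset m n = Some ` ({1..<n} \<times> {1..m}) \<union> {None}"
definition NSlab :: "nat \<Rightarrow> nat \<Rightarrow> ((nat \<times> nat) option \<times> (nat \<times> nat) option \<times> (nat \<times> nat) option) set" where
  "NSlab m n = (Tset m n \<times> Tset m n \<times> Tset m n) - {(None, None, None)}"
definition Xlab :: "nat \<Rightarrow> nat \<Rightarrow> (nat \<times> nat \<times> nat \<times> nat \<times> nat) set" where
  "Xlab m n = {1..<n} \<times> {1..m} \<times> {2..m} \<times> {1..<n} \<times> {1..m}"
definition Lab where "Lab m n = Inl ` NSlab m n \<union> Inr ` Xlab m n"

definition oi :: "nat \<Rightarrow> (nat \<times> nat) option \<Rightarrow> nat \<times> nat" where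
  "oi n t = (case t of Some p \<Rightarrow> p | None \<Rightarrow> (n, 1))"
definition pt :: "nat \<Rightarrow> ((nat \<times> nat) option \<times> (nat \<times> nat) option \<times> (nat \<times> nat) option) + (nat \<times> nat \<times> nat \<times> nat \<times> nat)
   \<Rightarrow> nat \<times> nat \<times> nat \<times> nat \<times> nat \<times> nat" where
  "pt n l = (case l of Inl (tA, tB, tC) \<Rightarrow> (fst (oi n tA), fst (oi n tB), fst (oi n tC), snd (oi n tA), snd (oi n tB), snd (oi n tC))
     | Inr (a, x, y, c, z) \<Rightarrow> (a, n, c, x, y, z))"

lemma card_Tset: "card (Tset m n) = (n - 1) * m + 1"
proof -
  have "card (Some ` ({1..<n} \<times> {1..m})) = (n - 1) * m"
    by (simp add: card_image card_cartesian_product)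
  moreover have "None \<notin> Some ` ({1..<n} \<times> {1..m})" by auto
  ultimately show ?thesis unfolding Tset_def by simp
qed

lemma finite_Tset: "finite (Tset m n)" by (simp add: Tset_def)

lemma card_NSlab: "card (NSlab m n) = ((n - 1) * m + 1) ^ 3 - 1"
proof -
  have "(None, None, None) \<in> Tset m n \<times> Tset m n \<times> Tset m n" by (simp add: Tset_def)
  then show ?thesis unfolding NSlab_def
    by (simp add: card_Diff_singleton card_cartesian_product card_Tset finite_Tset power3_eq_cube)
qed

lemma card_Xlab: "card (Xlab m n) = (n - 1) * m * (m - 1) * (n - 1) * m"
  by (simp add: Xlab_def card_cartesian_product)

lemma finite_Lab: "finite (Lab m n)"
  by (simp add: Lab_def NSlab_def Xlab_def finite_Tset)

lemma card_Lab: "card (Lab m n) = ((n - 1) * m + 1) ^ 3 - 1 + (n - 1) * m * (m - 1) * (n - 1) * m"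
proof -
  have "card (Lab m n) = card (Inl ` NSlab m n :: (_ + (nat \<times> nat \<times> nat \<times> nat \<times> nat)) set) + card (Inr ` Xlab m n :: (((nat \<times> nat) option \<times> (nat \<times> nat) option \<times> (nat \<times> nat) option) + _) set)"
    unfolding Lab_def by (rule card_Un_disjoint) (auto simp: NSlab_def Xlab_def finite_Tset)
  also have "card (Inl ` NSlab m n) = card (NSlab m n)" by (rule card_image) (simp add: inj_on_def)
  also have "card (Inr ` Xlab m n) = card (Xlab m n)" by (rule card_image) (simp add: inj_on_def)
  finally have "card (Lab m n) = card (NSlab m n) + card (Xlab m n)" .
  moreover have "((n - 1) * m + 1) ^ 3 \<ge> (1::nat)" by simp
  ultimately show ?thesis by (simp only: card_NSlab card_Xlab)
qed

lemma inj_lab: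
  assumes H: "hom m n R" and n: "1 \<le> n" and m: "1 \<le> m" and Z: "\<forall>l\<in>Lab m n. R (pt n l) = 0"
  shows "R i = 0"
proof (rule inj_core[OF H n m])
  define tt where "tt (a::nat) (x::nat) = (if a < n then Some (a, x) else None)" for a x
  have tt_T: "tt a x \<in> Tset m n" if "a \<in> {1..n}" "x \<in> {1..m}" for a x
    using that by (auto simp: tt_def Tset_def)
  have tt_oi: "oi n (tt a x) = (a, x)" if "a \<in> {1..n}" "a < n \<or> x = 1" for a x
    using that by (auto simp: tt_def oi_def)
  fix a b c x y z
  assume h: "a \<in> {1..n}" "b \<in> {1..n}" "c \<in> {1..n}" "x \<in> {1..m}" "y \<in> {1..m}" "z \<in> {1..m}"
    "a < n \<or> x = 1" "b < n \<or> y = 1" "c < n \<or> z = 1" "\<not> (a = n \<and> b = n \<and> c = n)"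
  have ne: "(tt a x, tt b y, tt c z) \<noteq> (None, None, None)"
    using h(1-3) h(10) by (auto simp: tt_def split: if_splits)
  have "(tt a x, tt b y, tt c z) \<in> NSlab m n"
    unfolding NSlab_def using ne tt_T[OF h(1) h(4)] tt_T[OF h(2) h(5)] tt_T[OF h(3) h(6)] by simp
  then have mem: "Inl (tt a x, tt b y, tt c z) \<in> Lab m n" unfolding Lab_def by blast
  have "pt n (Inl (tt a x, tt b y, tt c z)) = (a,b,c,x,y,z)"
    using tt_oi[OF h(1) h(7)] tt_oi[OF h(2) h(8)] tt_oi[OF h(3) h(9)] by (simp add: pt_def)
  then show "R (a,b,c,x,y,z) = 0" using Z mem by force
next
  fix a c x y z
  assume h: "a \<in> {1..<n}" "c \<in> {1..<n}" "x \<in> {1..m}" "y \<in> {1..m}" "z \<in> {1..m}"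
  show "R (a,n,c,x,y,z) = 0"
  proof (cases "y = 1")
    case True
    have "Inl (Some (a,x), None, Some (c,z)) \<in> Lab m n"
      using h unfolding Lab_def NSlab_def Tset_def by auto
    moreover have "pt n (Inl (Some (a,x), None, Some (c,z))) = (a,n,c,x,y,z)"
      using True by (simp add: pt_def oi_def)
    ultimately show ?thesis using Z by force
  next
    case False
    have "Inr (a,x,y,c,z) \<in> Lab m n"
      using h False unfolding Lab_def Xlab_def by auto
    moreover have "pt n (Inr (a,x,y,c,z)) = (a,n,c,x,y,z)" by (simp add: pt_def)
    ultimately show ?thesis using Z by force
  qed
qed

lemma upper:
  assumes n: "1 \<le> n" and m: "1 \<le> m" and len: "length ps = Suc k" and S: "set ps \<subseteq> RC3 m n"
    and ai: "aff_independent ps"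
  shows "k \<le> card (Lab m n)"
proof (rule ccontr)
  assume "\<not> k \<le> card (Lab m n)"
  then have lt: "Suc (card (Lab m n)) < Suc k" by simp
  define Q where "Q = insert (\<lambda>j. 1) ((\<lambda>l j. (ps ! j) (pt n l)) ` Lab m n)"
  have fQ: "finite Q" using finite_Lab by (simp add: Q_def)
  have "card Q \<le> Suc (card ((\<lambda>l j. (ps ! j) (pt n l)) ` Lab m n))"
    unfolding Q_def by (rule card_insert_le_m1) (simp_all add: finite_Lab)
  also have "\<dots> \<le> Suc (card (Lab m n))" using card_image_le[OF finite_Lab] by simp
  finally have cQ: "card Q < card {..<length ps}" using lt len by simp
  obtain l where l1: "\<exists>j\<in>{..<length ps}. l j \<noteq> 0" and l2: "\<forall>f\<in>Q. (\<Sum>j\<in>{..<length ps}. l j * f j) = 0"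
    using homog[OF fQ _ cQ] by auto
  have sl: "(\<Sum>j<length ps. l j) = 0" using l2 by (auto simp: Q_def)
  have pl: "(\<Sum>j<length ps. l j * (ps ! j) (pt n la)) = 0" if "la \<in> Lab m n" for la
    using l2 that by (auto simp: Q_def)
  have H: "hom m n (\<lambda>i. \<Sum>j<length ps. l j * (ps ! j) i)" by (rule comb_hom[OF S sl])
  have "(\<Sum>j<length ps. l j * (ps ! j) i) = 0" for i
    by (rule inj_lab[OF H n m]) (use pl in auto)
  then have "\<forall>j<length ps. l j = 0" using ai sl unfolding aff_independent_def by blast
  then show False using l1 by auto
qed

definition Fv :: "nat \<Rightarrow> nat \<Rightarrow> (nat \<times> nat) option \<Rightarrow> nat \<Rightarrow> nat \<Rightarrow> real" where
  "Fv m n t a x = (case t of Some (a0, x0) \<Rightarrow> (if x = x0 then (if a = a0 then 1 else if a = n then -1 else 0) else 0)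
     | None \<Rightarrow> (if a = n \<and> x \<in> {1..m} then 1 else 0))"
definition hv :: "nat \<Rightarrow> nat \<Rightarrow> nat \<Rightarrow> nat \<Rightarrow> real" where
  "hv n y0 b y = (if b = n \<and> y = y0 then 1 else 0)"
definition prod3 :: "(nat \<Rightarrow> nat \<Rightarrow> real) \<Rightarrow> (nat \<Rightarrow> nat \<Rightarrow> real) \<Rightarrow> (nat \<Rightarrow> nat \<Rightarrow> real) \<Rightarrow> behaviour" where
  "prod3 f g k = (\<lambda>(a, b, c, x, y, z). f a x * g b y * k c z)"
definition dw :: "(nat \<times> nat) option \<Rightarrow> nat \<Rightarrow> nat \<Rightarrow> real" where
  "dw t a x = (case t of Some (a0, x0) \<Rightarrow> (if a = a0 \<and> x = x0 then 1 else 0) | None \<Rightarrow> (if x = 1 then 1 else 0))"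
definition pair :: "nat \<Rightarrow> nat \<Rightarrow> (nat \<Rightarrow> nat \<Rightarrow> real) \<Rightarrow> (nat \<Rightarrow> nat \<Rightarrow> real) \<Rightarrow> real" where
  "pair m n d f = (\<Sum>a\<in>{1..n}. \<Sum>x\<in>{1..m}. d a x * f a x)"

lemma prod3_app[simp]: "prod3 f g k (a, b, c, x, y, z) = f a x * g b y * k c z"
  by (simp add: prod3_def)

lemma sum_if_eq: "a0 \<in> A \<Longrightarrow> finite A \<Longrightarrow> (\<Sum>a\<in>A. if a = a0 then u else 0) = (u::real)"
  by simp

lemma if01_mult[simp]: "(if P then 1 else 0) * (u::real) = (if P then u else 0)"
  by simp

lemma pair_Some:
  assumes "a0 \<in> {1..n}" "x0 \<in> {1..m}"
  shows "pair m n (dw (Some (a0, x0))) f = f a0 x0"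
proof -
  have "pair m n (dw (Some (a0, x0))) f = (\<Sum>a\<in>{1..n}. if a = a0 then (\<Sum>x\<in>{1..m}. if x = x0 then f a0 x0 else 0) else 0)"
    unfolding pair_def dw_def by (intro sum.cong refl) auto
  also have "\<dots> = f a0 x0" using assms by simp
  finally show ?thesis .
qed

lemma pair_None:
  assumes "1 \<le> m"
  shows "pair m n (dw None) f = (\<Sum>a\<in>{1..n}. f a 1)"
proof -
  have "pair m n (dw None) f = (\<Sum>a\<in>{1..n}. (\<Sum>x\<in>{1..m}. if x = 1 then f a 1 else 0))"
    unfolding pair_def dw_def by (intro sum.cong refl) auto
  also have "\<dots> = (\<Sum>a\<in>{1..n}. f a 1)" using assms by simp
  finally show ?thesis .
qed

lemma sum_u:
  fixes a0 n :: nat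
  assumes "a0 \<in> {1..n}" "a0 \<noteq> n"
  shows "(\<Sum>a\<in>{1..n}. (if a = a0 then 1 else if a = n then -1 else 0)) = (0::real)"
proof -
  have "(\<Sum>a\<in>{1..n}. (if a = a0 then 1 else if a = n then -1 else 0)) = (\<Sum>a\<in>{1..n}. (if a = a0 then 1 else 0) + (if a = n then -1 else (0::real)))"
    using assms by (intro sum.cong refl) auto
  also have "\<dots> = (\<Sum>a\<in>{1..n}. if a = a0 then 1 else 0) + (\<Sum>a\<in>{1..n}. if a = n then -1 else (0::real))"
    by (rule sum.distrib)
  also have "\<dots> = 1 + (-1)"
  proof -
    have e1: "(\<Sum>a\<in>{1..n}. if a = a0 then 1 else 0) = (1::real)" by (rule sum_if_eq) (use assms in auto)
    have e2: "(\<Sum>a\<in>{1..n}. if a = n then -1 else 0) = (-1::real)" by (rule sum_if_eq) (use assms in auto)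
    show ?thesis using e1 e2 by simp
  qed
  finally show ?thesis by simp
qed

lemma sigma_Fv_Some:
  assumes "a0 \<in> {1..<n}"
  shows "(\<Sum>a\<in>{1..n}. Fv m n (Some (a0, x0)) a x) = 0"
proof (cases "x = x0")
  case True
  then show ?thesis using sum_u[of a0 n] assms by (simp add: Fv_def)
next
  case False
  then show ?thesis by (simp add: Fv_def)
qed

lemma sigma_Fv_None:
  assumes "x \<in> {1..m}" "1 \<le> n"
  shows "(\<Sum>a\<in>{1..n}. Fv m n None a x) = 1"
proof -
  have "(\<Sum>a\<in>{1..n}. Fv m n None a x) = (\<Sum>a\<in>{1..n}. if a = n then 1 else 0)"
    using assms by (intro sum.cong refl) (auto simp: Fv_def)
  also have "\<dots> = 1" using assms by simp
  finally show ?thesis .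
qed

lemma pair_F:
  assumes "t \<in> Tset m n" "t' \<in> Tset m n" "1 \<le> m" "1 \<le> n"
  shows "pair m n (dw t) (Fv m n t') = (if t = t' then 1 else 0)"
proof (cases t)
  case None
  then show ?thesis
  proof (cases t')
    case None
    have "(\<Sum>a\<in>{1..n}. Fv m n None a 1) = 1" using assms by (intro sigma_Fv_None) (auto simp: Tset_def)
    then show ?thesis using \<open>t = None\<close> None pair_None[OF assms(3)] by simp
  next
    case (Some p)
    then obtain a1 x1 where p: "t' = Some (a1, x1)" "a1 \<in> {1..<n}" using assms(2) by (auto simp: Tset_def)
    have "(\<Sum>a\<in>{1..n}. Fv m n (Some (a1, x1)) a 1) = 0" by (rule sigma_Fv_Some) (use p in auto)
    then show ?thesis using \<open>t = None\<close> p pair_None[OF assms(3)] by simp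
  qed
next
  case (Some p)
  then obtain a0 x0 where p: "t = Some (a0, x0)" "a0 \<in> {1..<n}" "x0 \<in> {1..m}" using assms(1) by (auto simp: Tset_def)
  have "pair m n (dw t) (Fv m n t') = Fv m n t' a0 x0" using p pair_Some[of a0 n x0 m] by auto
  also have "\<dots> = (if t = t' then 1 else 0)" using p by (auto simp: Fv_def split: option.splits)
  finally show ?thesis .
qed

lemma pair_h:
  assumes "t \<in> Tset m n" "y0 \<in> {2..m}"
  shows "pair m n (dw t) (hv n y0) = 0"
proof (cases t)
  case None
  then show ?thesis using assms pair_None[of m n] by (simp add: hv_def)
next
  case (Some p)
  then obtain a0 x0 where p: "t = Some (a0, x0)" "a0 \<in> {1..<n}" "x0 \<in> {1..m}" using assms(1) by (auto simp: Tset_def)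
  then show ?thesis using pair_Some[of a0 n x0 m] by (simp add: hv_def)
qed

lemma g1: "(\<Sum>a\<in>A. f a * G) = (\<Sum>a\<in>A. f a) * (G::real)"
  by (simp add: sum_distrib_right)
lemma g2: "(\<Sum>c\<in>C. F * k c) = F * (\<Sum>c\<in>C. k c::real)"
  by (simp add: sum_distrib_left)
lemma g3: "(\<Sum>b\<in>B. F * g b * K) = F * (\<Sum>b\<in>B. g b) * (K::real)"
  by (simp only: g1 g2)
lemma g23: "(\<Sum>b\<in>B. \<Sum>c\<in>C. F * g b * k c) = F * (\<Sum>b\<in>B. g b) * (\<Sum>c\<in>C. k c::real)"
  by (simp only: g1 g2)
lemma g12: "(\<Sum>a\<in>A. \<Sum>b\<in>B. f a * g b * K) = (\<Sum>a\<in>A. f a) * (\<Sum>b\<in>B. g b) * (K::real)"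
  by (simp only: g1 g2)
lemma g123: "(\<Sum>a\<in>A. \<Sum>b\<in>B. \<Sum>c\<in>C. f a * g b * k c) = (\<Sum>a\<in>A. f a) * (\<Sum>b\<in>B. g b) * (\<Sum>c\<in>C. k c::real)"
  by (simp only: g1 g2)

lemma hom_prod3:
  assumes sf: "\<And>a x. \<not> (a \<in> {1..n} \<and> x \<in> {1..m}) \<Longrightarrow> f a x = 0"
    and sg: "\<And>a x. \<not> (a \<in> {1..n} \<and> x \<in> {1..m}) \<Longrightarrow> g a x = 0"
    and sk: "\<And>a x. \<not> (a \<in> {1..n} \<and> x \<in> {1..m}) \<Longrightarrow> k a x = 0"
    and cf: "\<And>x. x \<in> {1..m} \<Longrightarrow> (\<Sum>a\<in>{1..n}. f a x) = cf"
    and ck: "\<And>x. x \<in> {1..m} \<Longrightarrow> (\<Sum>a\<in>{1..n}. k a x) = ck"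
    and cg: "((\<forall>y\<in>{1..m}. (\<Sum>b\<in>{1..n}. g b y) = cg) \<and> cf * cg * ck = 0) \<or> (cf = 0 \<and> ck = 0)"
  shows "hom m n (prod3 f g k)"
  unfolding hom_def prod3_app
proof (intro conjI ballI allI impI)
  fix a b c x y z
  assume "\<not> (a \<in> {1..n} \<and> b \<in> {1..n} \<and> c \<in> {1..n} \<and> x \<in> {1..m} \<and> y \<in> {1..m} \<and> z \<in> {1..m})"
  then show "f a x * g b y * k c z = 0" using sf[of a x] sg[of b y] sk[of c z] by auto
next
  fix x y z assume h: "x \<in> {1..m}" "y \<in> {1..m}" "z \<in> {1..m}"
  show "(\<Sum>a\<in>{1..n}. \<Sum>b\<in>{1..n}. \<Sum>c\<in>{1..n}. f a x * g b y * k c z) = 0"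
    unfolding g123 using cf[OF h(1)] ck[OF h(3)] cg h by auto
next
  fix x x' y z b c assume h: "x \<in> {1..m}" "x' \<in> {1..m}" "y \<in> {1..m}" "z \<in> {1..m}" "b \<in> {1..n}" "c \<in> {1..n}"
  show "(\<Sum>a\<in>{1..n}. f a x * g b y * k c z) = (\<Sum>a\<in>{1..n}. f a x' * g b y * k c z)"
    unfolding mult.assoc g1 using cf h by simp
next
  fix z z' x y a b assume h: "z \<in> {1..m}" "z' \<in> {1..m}" "x \<in> {1..m}" "y \<in> {1..m}" "a \<in> {1..n}" "b \<in> {1..n}"
  show "(\<Sum>c\<in>{1..n}. f a x * g b y * k c z) = (\<Sum>c\<in>{1..n}. f a x * g b y * k c z')"
    unfolding g2 using ck h by simp
next
  fix y y' z z' x a assume h: "y \<in> {1..m}" "y' \<in> {1..m}" "z \<in> {1..m}" "z' \<in> {1..m}" "x \<in> {1..m}" "a \<in> {1..n}"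
  show "(\<Sum>b\<in>{1..n}. \<Sum>c\<in>{1..n}. f a x * g b y * k c z) = (\<Sum>b\<in>{1..n}. \<Sum>c\<in>{1..n}. f a x * g b y' * k c z')"
    unfolding g23 using ck[OF h(3)] ck[OF h(4)] cg h by auto
next
  fix x x' y y' z c assume h: "x \<in> {1..m}" "x' \<in> {1..m}" "y \<in> {1..m}" "y' \<in> {1..m}" "z \<in> {1..m}" "c \<in> {1..n}"
  show "(\<Sum>a\<in>{1..n}. \<Sum>b\<in>{1..n}. f a x * g b y * k c z) = (\<Sum>a\<in>{1..n}. \<Sum>b\<in>{1..n}. f a x' * g b y' * k c z)"
    unfolding g12 using cf[OF h(1)] cf[OF h(2)] cg h by auto
qed

definition vec :: "nat \<Rightarrow> nat \<Rightarrow> ((nat \<times> nat) option \<times> (nat \<times> nat) option \<times> (nat \<times> nat) option) + (nat \<times> nat \<times> nat \<times> nat \<times> nat) \<Rightarrow> behaviour" where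
  "vec m n l = (case l of Inl (tA, tB, tC) \<Rightarrow> prod3 (Fv m n tA) (Fv m n tB) (Fv m n tC)
     | Inr (a0, x0, y0, c0, z0) \<Rightarrow> prod3 (Fv m n (Some (a0, x0))) (hv n y0) (Fv m n (Some (c0, z0))))"

lemma Fv_supp: "t \<in> Tset m n \<Longrightarrow> 1 \<le> n \<Longrightarrow> \<not> (a \<in> {1..n} \<and> x \<in> {1..m}) \<Longrightarrow> Fv m n t a x = 0"
  by (auto simp: Tset_def Fv_def)

lemma hv_supp: "y0 \<in> {1..m} \<Longrightarrow> 1 \<le> n \<Longrightarrow> \<not> (a \<in> {1..n} \<and> x \<in> {1..m}) \<Longrightarrow> hv n y0 a x = 0"
  by (auto simp: hv_def)

lemma sigma_Fv:
  assumes "t \<in> Tset m n" "x \<in> {1..m}" "1 \<le> n"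
  shows "(\<Sum>a\<in>{1..n}. Fv m n t a x) = (if t = None then 1 else 0)"
proof (cases t)
  case None then show ?thesis using sigma_Fv_None assms by simp
next
  case (Some p)
  then obtain a0 x0 where "t = Some (a0, x0)" "a0 \<in> {1..<n}" using assms by (auto simp: Tset_def)
  then show ?thesis using sigma_Fv_Some by simp
qed

lemma vec_hom:
  assumes "l \<in> Lab m n" "1 \<le> n"
  shows "hom m n (vec m n l)"
proof (cases l)
  case (Inl io)
  obtain tA tB tC where io: "io = (tA, tB, tC)" by (cases io) auto
  have "io \<in> NSlab m n" using assms Inl by (auto simp: Lab_def)
  then have l: "l = Inl (tA, tB, tC)" "tA \<in> Tset m n" "tB \<in> Tset m n" "tC \<in> Tset m n"
    "(tA, tB, tC) \<noteq> (None, None, None)"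
    using Inl io unfolding NSlab_def by blast+
  show ?thesis unfolding l vec_def sum.case prod.case
    apply (rule hom_prod3[where cf = "if tA = None then 1 else 0" and cg = "if tB = None then 1 else 0" and ck = "if tC = None then 1 else 0"])
    subgoal by (rule Fv_supp[OF l(2) assms(2)])
    subgoal by (rule Fv_supp[OF l(3) assms(2)])
    subgoal by (rule Fv_supp[OF l(4) assms(2)])
    subgoal by (rule sigma_Fv[OF l(2) _ assms(2)])
    subgoal by (rule sigma_Fv[OF l(4) _ assms(2)])
    subgoal using sigma_Fv[OF l(3) _ assms(2)] l(5) by auto
    done
next
  case (Inr ka)
  then obtain a0 x0 y0 c0 z0 where l: "l = Inr (a0, x0, y0, c0, z0)" "a0 \<in> {1..<n}" "x0 \<in> {1..m}" "y0 \<in> {2..m}"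
    "c0 \<in> {1..<n}" "z0 \<in> {1..m}"
    using assms by (auto simp: Lab_def Xlab_def)
  have tA: "Some (a0, x0) \<in> Tset m n" and tC: "Some (c0, z0) \<in> Tset m n" using l by (auto simp: Tset_def)
  show ?thesis unfolding l vec_def sum.case prod.case
    apply (rule hom_prod3[where cf = 0 and cg = 0 and ck = 0])
    subgoal by (rule Fv_supp[OF tA assms(2)])
    subgoal by (rule hv_supp[OF _ assms(2)]) (use l in auto)
    subgoal by (rule Fv_supp[OF tC assms(2)])
    subgoal using sigma_Fv[OF tA _ assms(2)] by simp
    subgoal using sigma_Fv[OF tC _ assms(2)] by simp
    subgoal by simp
    done
qed

lemma vec_bound: "\<bar>vec m n l i\<bar> \<le> 1"
proof -
  have F: "\<bar>Fv m n t a x\<bar> \<le> 1" for t a x by (auto simp: Fv_def split: option.splits)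
  have H: "\<bar>hv n y0 a x\<bar> \<le> 1" for y0 a x by (auto simp: hv_def)
  have P: "\<bar>prod3 f g k i\<bar> \<le> 1" if "\<And>a x. \<bar>f a x\<bar> \<le> 1" "\<And>a x. \<bar>g a x\<bar> \<le> 1" "\<And>a x. \<bar>k a x\<bar> \<le> 1" for f g k
  proof -
    obtain a b c x y z where i: "i = (a,b,c,x,y,z)" by (cases i) auto
    have "\<bar>f a x * g b y * k c z\<bar> \<le> 1"
      unfolding abs_mult using that by (meson abs_ge_zero mult_le_one)
    then show ?thesis using i by simp
  qed
  show ?thesis unfolding vec_def by (auto split: sum.splits intro!: P F H)
qed

definition Pt :: "nat \<Rightarrow> nat \<Rightarrow> behaviour \<Rightarrow> behaviour" where
  "Pt m n V = (\<lambda>(a, b, c, x, y, z). if a \<in> {1..n} \<and> b \<in> {1..n} \<and> c \<in> {1..n} \<and> x \<in> {1..m} \<and> y \<in> {1..m} \<and> z \<in> {1..m}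
      then (1 + V (a, b, c, x, y, z)) / real n ^ 3 else 0)"

lemma sum_aff: "(\<Sum>a\<in>A. u + e * f a) = real (card A) * u + e * (\<Sum>a\<in>A. f a)"
  by (simp add: sum.distrib sum_distrib_left)

lemma Pt_RC3:
  assumes H: "hom m n V" and B: "\<And>i. \<bar>V i\<bar> \<le> 1" and n: "1 \<le> n"
  shows "Pt m n V \<in> RC3 m n"
proof -
  define e where "e = 1 / real n ^ 3"
  have Q: "Pt m n V (a,b,c,x,y,z) = e + e * V (a,b,c,x,y,z)"
    if "a \<in> {1..n}" "b \<in> {1..n}" "c \<in> {1..n}" "x \<in> {1..m}" "y \<in> {1..m}" "z \<in> {1..m}" for a b c x y z
    using that by (simp add: Pt_def e_def add_divide_distrib)
  have e0: "e > 0" using n by (simp add: e_def)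
  show ?thesis unfolding RC3_def mem_Collect_eq
  proof (intro conjI ballI allI impI)
    fix a b c x y z
    assume "\<not> (a \<in> {1..n} \<and> b \<in> {1..n} \<and> c \<in> {1..n} \<and> x \<in> {1..m} \<and> y \<in> {1..m} \<and> z \<in> {1..m})"
    then show "Pt m n V (a,b,c,x,y,z) = 0" unfolding Pt_def by auto
  next
    fix a b c x y z
    assume h: "a \<in> {1..n}" "b \<in> {1..n}" "c \<in> {1..n}" "x \<in> {1..m}" "y \<in> {1..m}" "z \<in> {1..m}"
    have "-1 \<le> V (a,b,c,x,y,z)" using B[of "(a,b,c,x,y,z)"] by simp
    then have "0 \<le> e * (1 + V (a,b,c,x,y,z))" using e0 by simp
    then show "0 \<le> Pt m n V (a,b,c,x,y,z)" using Q[OF h] by (simp add: algebra_simps)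
  next
    fix x y z assume h: "x \<in> {1..m}" "y \<in> {1..m}" "z \<in> {1..m}"
    have "(\<Sum>a\<in>{1..n}. \<Sum>b\<in>{1..n}. \<Sum>c\<in>{1..n}. Pt m n V (a,b,c,x,y,z))
        = (\<Sum>a\<in>{1..n}. \<Sum>b\<in>{1..n}. \<Sum>c\<in>{1..n}. e + e * V (a,b,c,x,y,z))"
      using Q h by (intro sum.cong refl) auto
    also have "\<dots> = real n * (real n * (real n * e)) + e * (\<Sum>a\<in>{1..n}. \<Sum>b\<in>{1..n}. \<Sum>c\<in>{1..n}. V (a,b,c,x,y,z))"
      by (simp only: sum_aff card_atLeastAtMost) simp
    also have "\<dots> = 1" using hom_sum[OF H h] n by (simp add: e_def power3_eq_cube)
    finally show "(\<Sum>a\<in>{1..n}. \<Sum>b\<in>{1..n}. \<Sum>c\<in>{1..n}. Pt m n V (a,b,c,x,y,z)) = 1" .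
  next
    fix x x' y z b c assume h: "x \<in> {1..m}" "x' \<in> {1..m}" "y \<in> {1..m}" "z \<in> {1..m}" "b \<in> {1..n}" "c \<in> {1..n}"
    have "(\<Sum>a\<in>{1..n}. Pt m n V (a,b,c,x,y,z)) = (\<Sum>a\<in>{1..n}. e + e * V (a,b,c,x,y,z))"
      using Q h by (intro sum.cong refl) auto
    moreover have "(\<Sum>a\<in>{1..n}. Pt m n V (a,b,c,x',y,z)) = (\<Sum>a\<in>{1..n}. e + e * V (a,b,c,x',y,z))"
      using Q h by (intro sum.cong refl) auto
    ultimately show "(\<Sum>a\<in>{1..n}. Pt m n V (a,b,c,x,y,z)) = (\<Sum>a\<in>{1..n}. Pt m n V (a,b,c,x',y,z))"
      using hom_i[OF H h] by (simp only: sum_aff)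
  next
    fix z z' x y a b assume h: "z \<in> {1..m}" "z' \<in> {1..m}" "x \<in> {1..m}" "y \<in> {1..m}" "a \<in> {1..n}" "b \<in> {1..n}"
    have "(\<Sum>c\<in>{1..n}. Pt m n V (a,b,c,x,y,z)) = (\<Sum>c\<in>{1..n}. e + e * V (a,b,c,x,y,z))"
      using Q h by (intro sum.cong refl) auto
    moreover have "(\<Sum>c\<in>{1..n}. Pt m n V (a,b,c,x,y,z')) = (\<Sum>c\<in>{1..n}. e + e * V (a,b,c,x,y,z'))"
      using Q h by (intro sum.cong refl) auto
    ultimately show "(\<Sum>c\<in>{1..n}. Pt m n V (a,b,c,x,y,z)) = (\<Sum>c\<in>{1..n}. Pt m n V (a,b,c,x,y,z'))"
      using hom_ii[OF H h] by (simp only: sum_aff)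
  next
    fix y y' z z' x a assume h: "y \<in> {1..m}" "y' \<in> {1..m}" "z \<in> {1..m}" "z' \<in> {1..m}" "x \<in> {1..m}" "a \<in> {1..n}"
    have "(\<Sum>b\<in>{1..n}. \<Sum>c\<in>{1..n}. Pt m n V (a,b,c,x,y,z)) = (\<Sum>b\<in>{1..n}. \<Sum>c\<in>{1..n}. e + e * V (a,b,c,x,y,z))"
      using Q h by (intro sum.cong refl) auto
    moreover have "(\<Sum>b\<in>{1..n}. \<Sum>c\<in>{1..n}. Pt m n V (a,b,c,x,y',z')) = (\<Sum>b\<in>{1..n}. \<Sum>c\<in>{1..n}. e + e * V (a,b,c,x,y',z'))"
      using Q h by (intro sum.cong refl) auto
    ultimately show "(\<Sum>b\<in>{1..n}. \<Sum>c\<in>{1..n}. Pt m n V (a,b,c,x,y,z)) = (\<Sum>b\<in>{1..n}. \<Sum>c\<in>{1..n}. Pt m n V (a,b,c,x,y',z'))"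
      using hom_iii[OF H h] by (simp only: sum_aff)
  next
    fix x x' y y' z c assume h: "x \<in> {1..m}" "x' \<in> {1..m}" "y \<in> {1..m}" "y' \<in> {1..m}" "z \<in> {1..m}" "c \<in> {1..n}"
    have "(\<Sum>a\<in>{1..n}. \<Sum>b\<in>{1..n}. Pt m n V (a,b,c,x,y,z)) = (\<Sum>a\<in>{1..n}. \<Sum>b\<in>{1..n}. e + e * V (a,b,c,x,y,z))"
      using Q h by (intro sum.cong refl) auto
    moreover have "(\<Sum>a\<in>{1..n}. \<Sum>b\<in>{1..n}. Pt m n V (a,b,c,x',y',z)) = (\<Sum>a\<in>{1..n}. \<Sum>b\<in>{1..n}. e + e * V (a,b,c,x',y',z))"
      using Q h by (intro sum.cong refl) auto
    ultimately show "(\<Sum>a\<in>{1..n}. \<Sum>b\<in>{1..n}. Pt m n V (a,b,c,x,y,z)) = (\<Sum>a\<in>{1..n}. \<Sum>b\<in>{1..n}. Pt m n V (a,b,c,x',y',z))"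
      using hom_iv[OF H h] by (simp only: sum_aff)
  qed
qed

lemma hom_zero: "hom m n (\<lambda>_. 0)"
  by (simp add: hom_def)

definition app :: "nat \<Rightarrow> nat \<Rightarrow> behaviour \<Rightarrow> behaviour \<Rightarrow> real" where
  "app m n W V = (\<Sum>a\<in>{1..n}. \<Sum>x\<in>{1..m}. \<Sum>b\<in>{1..n}. \<Sum>y\<in>{1..m}. \<Sum>c\<in>{1..n}. \<Sum>z\<in>{1..m}.
      W (a, b, c, x, y, z) * V (a, b, c, x, y, z))"

lemma app_lin: "app m n W (\<lambda>i. \<Sum>k<(N::nat). cc k * v k i) = (\<Sum>k<N. cc k * app m n W (v k))"
proof -
  have inner: "W i * (\<Sum>k<N. cc k * v k i) = (\<Sum>k<N. cc k * (W i * v k i))" for i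
    by (simp add: sum_distrib_left mult.left_commute)
  show ?thesis unfolding app_def inner by (simp only: sum_lin)
qed

lemma app_zero: "app m n W (\<lambda>_. 0) = 0"
  by (simp add: app_def)

lemma app_prod: "app m n (prod3 dA dB dC) (prod3 f g k) = pair m n dA f * pair m n dB g * pair m n dC k"
proof -
  have e: "prod3 dA dB dC (a, b, c, x, y, z) * prod3 f g k (a, b, c, x, y, z)
      = (dA a x * f a x) * (dB b y * g b y) * (dC c z * k c z)" for a b c x y z
    by (simp add: ac_simps)
  show ?thesis unfolding app_def e pair_def by (simp only: g1 g2)
qed

lemma dual_NS:
  assumes io: "(tA, tB, tC) \<in> NSlab m n" and l: "la \<in> Lab m n" and m: "1 \<le> m" and n: "1 \<le> n"
  shows "app m n (prod3 (dw tA) (dw tB) (dw tC)) (vec m n la) = (if la = Inl (tA, tB, tC) then 1 else 0)"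
proof -
  have T: "tA \<in> Tset m n" "tB \<in> Tset m n" "tC \<in> Tset m n" using io by (auto simp: NSlab_def)
  show ?thesis
  proof (cases la)
    case (Inl io')
    obtain sA sB sC where io': "io' = (sA, sB, sC)" by (cases io') auto
    have "io' \<in> NSlab m n" using l Inl by (auto simp: Lab_def)
    then have S: "sA \<in> Tset m n" "sB \<in> Tset m n" "sC \<in> Tset m n" using io' by (auto simp: NSlab_def)
    show ?thesis unfolding Inl io' vec_def sum.case prod.case app_prod
      using pair_F[OF T(1) S(1) m n] pair_F[OF T(2) S(2) m n] pair_F[OF T(3) S(3) m n] by auto
  next
    case (Inr ka)
    obtain a0 x0 y0 c0 z0 where ka: "ka = (a0, x0, y0, c0, z0)" by (cases ka) auto
    have "ka \<in> Xlab m n" using l Inr by (auto simp: Lab_def)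
    then have y0: "y0 \<in> {2..m}" using ka by (auto simp: Xlab_def)
    show ?thesis unfolding Inr ka vec_def sum.case prod.case app_prod
      using pair_h[OF T(2) y0] by simp
  qed
qed

lemma eval_X:
  assumes k: "(a0, x0, y0, c0, z0) \<in> Xlab m n" and k': "ka' \<in> Xlab m n"
  shows "vec m n (Inr ka') (a0, n, c0, x0, y0, z0) = (if ka' = (a0, x0, y0, c0, z0) then 1 else 0)"
proof -
  obtain a1 x1 y1 c1 z1 where ka': "ka' = (a1, x1, y1, c1, z1)" by (cases ka') auto
  have "a0 \<noteq> n" "c0 \<noteq> n" using k by (auto simp: Xlab_def)
  then show ?thesis unfolding ka' vec_def sum.case prod.case prod3_app
    by (auto simp: Fv_def hv_def)
qed

lemma lower:
  assumes n: "1 \<le> n" and m: "1 \<le> m"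
  shows "\<exists>ps. length ps = Suc (card (Lab m n)) \<and> set ps \<subseteq> RC3 m n \<and> aff_independent ps"
proof -
  obtain lst where dl: "distinct lst" and sl: "set lst = Lab m n"
    using finite_distinct_list[OF finite_Lab] by blast
  define N where "N = length lst"
  have N: "N = card (Lab m n)" using distinct_card[OF dl] sl by (simp add: N_def)
  have inL: "lst ! k \<in> Lab m n" if "k < N" for k using that sl by (auto simp: N_def)
  define Vs where "Vs j = (if j = 0 then (\<lambda>_. 0) else vec m n (lst ! (j - 1)))" for j
  define ps where "ps = map (\<lambda>j. Pt m n (Vs j)) [0..<Suc N]"
  have len: "length ps = Suc N" by (simp add: ps_def)
  have psj: "ps ! j = Pt m n (Vs j)" if "j < Suc N" for j using that unfolding ps_def by (simp del: upt_Suc)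
  have homV: "hom m n (Vs j)" if "j < Suc N" for j
  proof (cases "j = 0")
    case True then show ?thesis by (simp add: Vs_def hom_zero)
  next
    case False then show ?thesis using that by (simp add: Vs_def vec_hom[OF inL n])
  qed
  have bV: "\<bar>Vs j i\<bar> \<le> 1" for j i by (simp add: Vs_def vec_bound)
  have "set ps \<subseteq> RC3 m n"
  proof
    fix P assume "P \<in> set ps"
    then obtain j where j: "j < Suc N" "P = ps ! j" using len by (metis in_set_conv_nth)
    then show "P \<in> RC3 m n" using Pt_RC3[OF homV[OF j(1)] bV n] psj by simp
  qed
  moreover have "aff_independent ps"
    unfolding aff_independent_def len
  proof (rule allI, rule impI)
    fix l :: "nat \<Rightarrow> real"
    assume "(\<Sum>j<Suc N. l j) = 0 \<and> (\<forall>i. (\<Sum>j<Suc N. l j * (ps ! j) i) = 0)"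
    then have s0: "(\<Sum>j<Suc N. l j) = 0" and s1: "\<And>i. (\<Sum>j<Suc N. l j * (ps ! j) i) = 0" by auto
    define cc where "cc k = l (Suc k)" for k
    have V0: "(\<Sum>k<N. cc k * vec m n (lst ! k) i) = 0" for i
    proof -
      obtain a b c x y z where i: "i = (a,b,c,x,y,z)" by (cases i) auto
      have shift: "(\<Sum>j<Suc N. l j * Vs j i) = (\<Sum>k<N. cc k * vec m n (lst ! k) i)"
        by (subst sum.lessThan_Suc_shift) (simp add: Vs_def cc_def)
      show ?thesis
      proof (cases "a \<in> {1..n} \<and> b \<in> {1..n} \<and> c \<in> {1..n} \<and> x \<in> {1..m} \<and> y \<in> {1..m} \<and> z \<in> {1..m}")
        case True
        have "(\<Sum>j<Suc N. l j * (ps ! j) i) = (\<Sum>j<Suc N. (l j + l j * Vs j i) / real n ^ 3)"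
          using True psj i by (intro sum.cong refl) (simp add: Pt_def algebra_simps)
        also have "\<dots> = ((\<Sum>j<Suc N. l j) + (\<Sum>j<Suc N. l j * Vs j i)) / real n ^ 3"
          by (simp only: sum_divide_distrib[symmetric] sum.distrib[symmetric])
        finally have "(\<Sum>j<Suc N. l j * Vs j i) = 0" using s1[of i] s0 n by simp
        then show ?thesis using shift by simp
      next
        case False
        have "vec m n (lst ! k) i = 0" if "k < N" for k
          using hom_out[OF vec_hom[OF inL[OF that] n] False] i by simp
        then show ?thesis by simp
      qed
    qed
    have V0f: "(\<lambda>i. \<Sum>k<N. cc k * vec m n (lst ! k) i) = (\<lambda>_. 0)" using V0 by auto
    have NS: "cc k0 = 0" if k0: "k0 < N" "lst ! k0 = Inl io" for k0 io
    proof -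
      obtain tA tB tC where io: "io = (tA, tB, tC)" by (cases io) auto
      have ioN: "(tA, tB, tC) \<in> NSlab m n" using inL[OF k0(1)] k0(2) io by (auto simp: Lab_def)
      have "0 = app m n (prod3 (dw tA) (dw tB) (dw tC)) (\<lambda>i. \<Sum>k<N. cc k * vec m n (lst ! k) i)"
        unfolding V0f app_zero ..
      also have "\<dots> = (\<Sum>k<N. cc k * (if lst ! k = Inl (tA, tB, tC) then 1 else 0))"
        unfolding app_lin using dual_NS[OF ioN inL m n] by simp
      also have "\<dots> = (\<Sum>k<N. if k = k0 then cc k else 0)"
      proof (intro sum.cong refl)
        fix k assume "k \<in> {..<N}"
        then have k: "k < N" by simp
        have "lst ! k = lst ! k0 \<longleftrightarrow> k = k0" using nth_eq_iff_index_eq[OF dl] k k0(1) by (simp add: N_def)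
        then show "cc k * (if lst ! k = Inl (tA, tB, tC) then 1 else 0) = (if k = k0 then cc k else 0)"
          using k0(2) io by auto
      qed
      also have "\<dots> = cc k0" using k0 by simp
      finally show ?thesis by simp
    qed
    have XX: "cc k0 = 0" if k0: "k0 < N" "lst ! k0 = Inr ka" for k0 ka
    proof -
      obtain a0 x0 y0 c0 z0 where ka: "ka = (a0, x0, y0, c0, z0)" by (cases ka) auto
      have kX: "(a0, x0, y0, c0, z0) \<in> Xlab m n" using inL[OF k0(1)] k0(2) ka by (auto simp: Lab_def)
      have "0 = (\<Sum>k<N. cc k * vec m n (lst ! k) (a0, n, c0, x0, y0, z0))" using V0 by simp
      also have "\<dots> = (\<Sum>k<N. if k = k0 then cc k else 0)"
      proof (intro sum.cong refl)
        fix k assume "k \<in> {..<N}"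
        then have k: "k < N" by simp
        show "cc k * vec m n (lst ! k) (a0, n, c0, x0, y0, z0) = (if k = k0 then cc k else 0)"
        proof (cases "lst ! k")
          case (Inl io)
          then have "cc k = 0" using NS[OF k] by blast
          moreover have "k \<noteq> k0" using Inl k0 by auto
          ultimately show ?thesis by simp
        next
          case (Inr ka')
          have "ka' \<in> Xlab m n" using inL[OF k] Inr by (auto simp: Lab_def)
          then have "vec m n (lst ! k) (a0, n, c0, x0, y0, z0) = (if ka' = (a0, x0, y0, c0, z0) then 1 else 0)"
            using eval_X[OF kX] Inr by simp
          moreover have "(ka' = (a0, x0, y0, c0, z0)) = (k = k0)"
            using Inr k0 ka k dl by (metis N_def nth_eq_iff_index_eq sum.inject(2))
          ultimately show ?thesis by simp
        qed
      qed
      also have "\<dots> = cc k0" using k0 by simp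
      finally show ?thesis by simp
    qed
    have call: "cc k = 0" if "k < N" for k
    proof (cases "lst ! k")
      case (Inl io) then show ?thesis using NS[OF that] by blast
    next
      case (Inr ka) then show ?thesis using XX[OF that] by blast
    qed
    have "(\<Sum>j<Suc N. l j) = l 0 + (\<Sum>k<N. cc k)" by (subst sum.lessThan_Suc_shift) (simp add: cc_def)
    also have "(\<Sum>k<N. cc k) = 0" using call by simp
    finally have l0: "l 0 = 0" using s0 by simp
    show "\<forall>j<Suc N. l j = 0"
    proof (intro allI impI)
      fix j assume "j < Suc N"
      then show "l j = 0" using l0 call by (cases j) (auto simp: cc_def)
    qed
  qed
  ultimately show ?thesis using len N by blast
qed

theorem mainTheorem2:
  fixes m n :: nat
  assumes "m \<ge> 2" and "n \<ge> 2"
  shows "affine_dimension (RC3 m n) =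
           (int m * (int n - 1) + 1) ^ 3 + int m ^ 2 * (int m - 1) * (int n - 1) ^ 2 - 1"
proof -
  have n1: "1 \<le> n" and m1: "1 \<le> m" using assms by auto
  have "Pt m n (\<lambda>_. 0) \<in> RC3 m n" by (rule Pt_RC3[OF hom_zero _ n1]) simp
  then have ne: "RC3 m n \<noteq> {}" by auto
  have G: "(GREATEST k. \<exists>ps. length ps = Suc k \<and> set ps \<subseteq> RC3 m n \<and> aff_independent ps) = card (Lab m n)"
  proof (rule Greatest_equality)
    show "\<exists>ps. length ps = Suc (card (Lab m n)) \<and> set ps \<subseteq> RC3 m n \<and> aff_independent ps"
      by (rule lower[OF n1 m1])
  next
    fix k assume "\<exists>ps. length ps = Suc k \<and> set ps \<subseteq> RC3 m n \<and> aff_independent ps"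
    then show "k \<le> card (Lab m n)" using upper[OF n1 m1] by blast
  qed
  have A: "int ((n - 1) * m + 1) = (int n - 1) * int m + 1" using n1 by (simp add: of_nat_diff)
  have B: "int ((n - 1) * m * (m - 1) * (n - 1) * m) = (int n - 1) * int m * (int m - 1) * (int n - 1) * int m"
    using n1 m1 by (simp add: of_nat_diff)
  have P: "((n - 1) * m + 1) ^ 3 \<ge> (1::nat)" by simp
  have "int (card (Lab m n)) = int (((n - 1) * m + 1) ^ 3) - 1 + int ((n - 1) * m * (m - 1) * (n - 1) * m)"
  proof -
    have h: "int (X - 1 + Y) = int X - 1 + int Y" if "1 \<le> X" for X Y :: nat using that by auto
    show ?thesis unfolding card_Lab by (rule h[OF P])
  qed
  also have "\<dots> = ((int n - 1) * int m + 1) ^ 3 - 1 + (int n - 1) * int m * (int m - 1) * (int n - 1) * int m"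
    by (simp only: of_nat_power A B)
  also have "\<dots> = (int m * (int n - 1) + 1) ^ 3 + int m ^ 2 * (int m - 1) * (int n - 1) ^ 2 - 1"
    by (simp add: algebra_simps power2_eq_square)
  finally have C: "int (card (Lab m n)) = (int m * (int n - 1) + 1) ^ 3 + int m ^ 2 * (int m - 1) * (int n - 1) ^ 2 - 1" .
  show ?thesis unfolding affine_dimension_def using ne G C by simp
qed

end
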